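(* Let $\mathcal E$ be a nest on a complex Banach space $X$, let $\mathcal J$ be a $\mathcal T(\mathcal E)$-bimodule and let $\mathcal J_0$ be the set of finite rank operators in $\mathcal J$. Then $\mathcal J\subseteq\overline{\mathcal J_0}^{\mathrm{SOT}}\subseteq\overline{\mathcal J_0}^{\mathrm{WOT}}$, where the closures are in the strong and weak operator topologies respectively.
   Context: A nest $\mathcal E$ on $X$ is a family of closed linear subspaces of $X$, totally ordered by inclusion, containing $\{0\}$ and $X$, closed under arbitrary meets (intersections) and joins (norm-closed linear spans of unions). $\mathcal T(\mathcal E)=\{T\in\mathcal B(X): TE\subseteq E\ \forall E\in\mathcal E\}$. A $\mathcal T(\mathcal E)$-bimodule is a linear subspace $\mathcal J\subseteq\mathcal B(X)$ with $\mathcal T(\mathcal E)\mathcal J\subseteq\mathcal J$ and $\mathcal J\mathcal T(\mathcal E)\subseteq\mathcal J$. *)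

theory Defs
  imports "HOL-Analysis.Analysis"
begin

text \<open>A complex Banach space is modelled as a real Banach space (type class banach)
  together with a complex structure CJ (multiplication by the imaginary unit):
  CJ is real-linear, CJ (CJ x) = - x, and multiplication by unimodular scalars
  is isometric, so that the norm is a complex norm.\<close>

definition complex_structure :: "('a::real_normed_vector \<Rightarrow> 'a) \<Rightarrow> bool" where
  "complex_structure CJ \<longleftrightarrow> linear CJ \<and> (\<forall>x. CJ (CJ x) = - x) \<and>
     (\<forall>t x. norm (cos t *\<^sub>R x + sin t *\<^sub>R CJ x) = norm x)"

definition cscale :: "('a::real_vector \<Rightarrow> 'a) \<Rightarrow> complex \<Rightarrow> 'a \<Rightarrow> 'a" where
  "cscale CJ c x = Re c *\<^sub>R x + Im c *\<^sub>R CJ x"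

definition bops :: "('a::real_normed_vector \<Rightarrow> 'a) \<Rightarrow> ('a \<Rightarrow> 'a) set" where
  "bops CJ = {T. bounded_linear T \<and> (\<forall>x. T (CJ x) = CJ (T x))}"

definition cdual :: "('a::real_normed_vector \<Rightarrow> 'a) \<Rightarrow> ('a \<Rightarrow> complex) set" where
  "cdual CJ = {f. bounded_linear f \<and> (\<forall>x. f (CJ x) = \<i> * f x)}"

definition closed_csubspace :: "('a::real_normed_vector \<Rightarrow> 'a) \<Rightarrow> 'a set \<Rightarrow> bool" where
  "closed_csubspace CJ E \<longleftrightarrow> subspace E \<and> CJ ` E \<subseteq> E \<and> closed E"

definition nest :: "('a::real_normed_vector \<Rightarrow> 'a) \<Rightarrow> 'a set set \<Rightarrow> bool" where
  "nest CJ N \<longleftrightarrow>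
     (\<forall>E\<in>N. closed_csubspace CJ E) \<and>
     (\<forall>E\<in>N. \<forall>F\<in>N. E \<subseteq> F \<or> F \<subseteq> E) \<and>
     {0} \<in> N \<and> UNIV \<in> N \<and>
     (\<forall>S\<subseteq>N. \<Inter>S \<in> N) \<and>
     (\<forall>S\<subseteq>N. closure (span (\<Union>S)) \<in> N)"

definition nest_alg :: "('a::real_normed_vector \<Rightarrow> 'a) \<Rightarrow> 'a set set \<Rightarrow> ('a \<Rightarrow> 'a) set" where
  "nest_alg CJ N = {T \<in> bops CJ. \<forall>E\<in>N. T ` E \<subseteq> E}"

definition op_csubspace :: "('a::real_normed_vector \<Rightarrow> 'a) \<Rightarrow> ('a \<Rightarrow> 'a) set \<Rightarrow> bool" where
  "op_csubspace CJ M \<longleftrightarrow> M \<subseteq> bops CJ \<and> (\<lambda>x. 0) \<in> M \<and>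
     (\<forall>S\<in>M. \<forall>T\<in>M. (\<lambda>x. S x + T x) \<in> M) \<and>
     (\<forall>c. \<forall>T\<in>M. (\<lambda>x. cscale CJ c (T x)) \<in> M)"

definition bimodule :: "('a::real_normed_vector \<Rightarrow> 'a) \<Rightarrow> 'a set set \<Rightarrow> ('a \<Rightarrow> 'a) set \<Rightarrow> bool" where
  "bimodule CJ N M \<longleftrightarrow> op_csubspace CJ M \<and>
     (\<forall>A\<in>nest_alg CJ N. \<forall>T\<in>M. A \<circ> T \<in> M \<and> T \<circ> A \<in> M)"

definition finite_rank :: "('a::real_vector \<Rightarrow> 'a) \<Rightarrow> bool" where
  "finite_rank T \<longleftrightarrow> (\<exists>F. finite F \<and> range T \<subseteq> span F)"

text \<open>Closure in B(X) w.r.t. the strong operator topology, via its basic neighbourhoods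
  {S. \<forall>x\<in>F. norm (S x - T x) < e}, F finite, e > 0.\<close>
definition sot_closure :: "('a::real_normed_vector \<Rightarrow> 'a) \<Rightarrow> ('a \<Rightarrow> 'a) set \<Rightarrow> ('a \<Rightarrow> 'a) set" where
  "sot_closure CJ M = {T \<in> bops CJ. \<forall>F e. finite F \<and> e > 0 \<longrightarrow>
      (\<exists>S\<in>M. \<forall>x\<in>F. norm (S x - T x) < e)}"

text \<open>Closure in B(X) w.r.t. the weak operator topology, via its basic neighbourhoods
  {S. \<forall>(x,f)\<in>F. cmod (f (S x - T x)) < e}, F finite set of pairs in X \<times> X*, e > 0.\<close>
definition wot_closure :: "('a::real_normed_vector \<Rightarrow> 'a) \<Rightarrow> ('a \<Rightarrow> 'a) set \<Rightarrow> ('a \<Rightarrow> 'a) set" where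
  "wot_closure CJ M = {T \<in> bops CJ. \<forall>F e. finite F \<and> F \<subseteq> UNIV \<times> cdual CJ \<and> e > 0 \<longrightarrow>
      (\<exists>S\<in>M. \<forall>(x,f)\<in>F. cmod (f (S x - T x)) < e)}"

end

theory Submission
  imports Defs
begin


definition good_graph :: "real \<Rightarrow> ('a::real_normed_vector \<times> real) set \<Rightarrow> bool" where
  "good_graph C g \<longleftrightarrow> (\<forall>x a b. (x,a)\<in>g \<longrightarrow> (x,b)\<in>g \<longrightarrow> a = b) \<and> (0,0)\<in>g \<and>
     (\<forall>x a y b. (x,a)\<in>g \<longrightarrow> (y,b)\<in>g \<longrightarrow> (x+y, a+b)\<in>g) \<and>
     (\<forall>x a c. (x,a)\<in>g \<longrightarrow> (c *\<^sub>R x, c*a)\<in>g) \<and>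
     (\<forall>x a. (x,a)\<in>g \<longrightarrow> a \<le> C * norm x)"

lemma good_graph_ext:
  fixes g :: "('a::real_normed_vector \<times> real) set"
  assumes gg: "good_graph C g" and x0: "x0 \<notin> fst ` g" and C0: "C \<ge> 0"
  shows "\<exists>g'. good_graph C g' \<and> g \<subseteq> g' \<and> g' \<noteq> g"
proof -
  have fn: "\<And>x a b. (x,a)\<in>g \<Longrightarrow> (x,b)\<in>g \<Longrightarrow> a = b"
    and zero: "(0,0)\<in>g"
    and add: "\<And>x a y b. (x,a)\<in>g \<Longrightarrow> (y,b)\<in>g \<Longrightarrow> (x+y, a+b)\<in>g"
    and scl: "\<And>x a c. (x,a)\<in>g \<Longrightarrow> (c *\<^sub>R x, c*a)\<in>g"
    and bnd: "\<And>x a. (x,a)\<in>g \<Longrightarrow> a \<le> C * norm x"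
    using gg unfolding good_graph_def by blast+
  define S where "S = {a - C * norm (y - x0) | y a. (y,a)\<in>g}"
  define c where "c = Sup S"
  have key: "a - C * norm (y - x0) \<le> C * norm (z + x0) - b" if "(y,a)\<in>g" "(z,b)\<in>g" for y a z b
  proof -
    have "a + b \<le> C * norm (y + z)" using bnd[OF add[OF that]] .
    moreover have "C * norm (y + z) \<le> C * norm (y - x0) + C * norm (z + x0)"
      using norm_triangle_ineq[of "y - x0" "z + x0"] C0
      by (simp add: distrib_left[symmetric] mult_left_mono)
    ultimately show ?thesis by linarith
  qed
  have Sne: "S \<noteq> {}" using zero unfolding S_def by blast
  have Sbdd: "bdd_above S" unfolding S_def bdd_above_def using key[OF _ zero] by fastforce
  have c1: "a - C * norm (y - x0) \<le> c" if "(y,a)\<in>g" for y a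
    unfolding c_def by (rule cSup_upper[OF _ Sbdd]) (use that S_def in blast)
  have c2: "b + c \<le> C * norm (z + x0)" if "(z,b)\<in>g" for z b
  proof -
    have "c \<le> C * norm (z + x0) - b" unfolding c_def
      by (rule cSup_least[OF Sne]) (use key[OF _ that] S_def in blast)
    thus ?thesis by simp
  qed
  define g' where "g' = {(y + t *\<^sub>R x0, a + t * c) | y a t. (y,a)\<in>g}"
  have dom: "x0 \<notin> fst ` g" by (rule x0)
  have gm: "\<exists>y a1 t. (y,a1)\<in>g \<and> x = y + t *\<^sub>R x0 \<and> a = a1 + t * c" if "(x,a) \<in> g'" for x a
    using that unfolding g'_def by blast
  have fn': "a = a'" if "(y,a)\<in>g" "(y',a')\<in>g" "y + t *\<^sub>R x0 = y' + t' *\<^sub>R x0" for y a y' a' t t'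
  proof (cases "t = t'")
    case True
    then have "y = y'" using that(3) by simp
    then show ?thesis using fn that by blast
  next
    case False
    have "(y' + (-1) *\<^sub>R y, a' + (-1) * a) \<in> g" using add[OF that(2) scl[OF that(1)]] .
    hence "((1/(t - t')) *\<^sub>R (y' + (-1) *\<^sub>R y), (1/(t-t')) * (a' + (-1) * a)) \<in> g" by (rule scl)
    moreover have "(1/(t - t')) *\<^sub>R (y' + (-1) *\<^sub>R y) = x0"
    proof -
      have "y' - y = (t - t') *\<^sub>R x0" using that(3) by (simp add: algebra_simps)
      thus ?thesis using False by simp
    qed
    ultimately have "x0 \<in> fst ` g" by force
    thus ?thesis using dom by blast
  qed
  have "good_graph C g'"
    unfolding good_graph_def
  proof (intro conjI allI impI)
    fix x a b assume "(x,a)\<in>g'" "(x,b)\<in>g'"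
    then obtain y1 a1 t1 y2 a2 t2 where h: "(y1,a1)\<in>g" "(y2,a2)\<in>g" "x = y1 + t1 *\<^sub>R x0" "a = a1 + t1 * c"
      "x = y2 + t2 *\<^sub>R x0" "b = a2 + t2 * c" using gm by metis
    have "t1 = t2"
    proof (rule ccontr)
      assume ne: "t1 \<noteq> t2"
      have "(y2 + (-1) *\<^sub>R y1, a2 + (-1) * a1) \<in> g" using add[OF h(2) scl[OF h(1)]] .
      hence "((1/(t1 - t2)) *\<^sub>R (y2 + (-1) *\<^sub>R y1), (1/(t1-t2)) * (a2 + (-1) * a1)) \<in> g" by (rule scl)
      moreover have "(1/(t1 - t2)) *\<^sub>R (y2 + (-1) *\<^sub>R y1) = x0"
      proof -
        have "y2 - y1 = (t1 - t2) *\<^sub>R x0" using h by (simp add: algebra_simps)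
        thus ?thesis using ne by simp
      qed
      ultimately have "x0 \<in> fst ` g" by force
      thus False using dom by blast
    qed
    moreover have "a1 = a2" using fn' [OF h(1) h(2)] h(3,5) by metis
    ultimately show "a = b" using h by simp
  next
    show "(0,0) \<in> g'" unfolding g'_def using zero by force
  next
    fix x a y b assume "(x,a)\<in>g'" "(y,b)\<in>g'"
    then obtain y1 a1 t1 y2 a2 t2 where h: "(y1,a1)\<in>g" "(y2,a2)\<in>g" "x = y1 + t1 *\<^sub>R x0" "a = a1 + t1 * c"
      "y = y2 + t2 *\<^sub>R x0" "b = a2 + t2 * c" using gm by metis
    have "x + y = (y1 + y2) + (t1 + t2) *\<^sub>R x0" "a + b = (a1 + a2) + (t1 + t2) * c"
      using h by (simp_all add: algebra_simps)
    thus "(x+y, a+b) \<in> g'" unfolding g'_def using add[OF h(1,2)] by blast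
  next
    fix x a r assume "(x,a)\<in>g'"
    then obtain y1 a1 t1 where h: "(y1,a1)\<in>g" "x = y1 + t1 *\<^sub>R x0" "a = a1 + t1 * c"
      using gm by metis
    have "r *\<^sub>R x = r *\<^sub>R y1 + (r * t1) *\<^sub>R x0" "r * a = r * a1 + (r * t1) * c"
      using h by (simp_all add: algebra_simps)
    thus "(r *\<^sub>R x, r * a) \<in> g'" unfolding g'_def using scl[OF h(1)] by blast
  next
    fix x a assume "(x,a)\<in>g'"
    then obtain y a1 t where h: "(y,a1)\<in>g" "x = y + t *\<^sub>R x0" "a = a1 + t * c"
      using gm by metis
    consider "t = 0" | "t > 0" | "t < 0" by linarith
    then show "a \<le> C * norm x"
    proof cases
      case 1 thus ?thesis using h bnd by simp
    next
      case 2
      have "((1/t) *\<^sub>R y, (1/t) * a1) \<in> g" using scl[OF h(1)] .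
      from c2[OF this] have "(1/t) * a1 + c \<le> C * norm ((1/t) *\<^sub>R y + x0)" .
      hence "t * ((1/t) * a1 + c) \<le> t * (C * norm ((1/t) *\<^sub>R y + x0))"
        using 2 by (simp add: mult_left_mono)
      moreover have "t * (C * norm ((1/t) *\<^sub>R y + x0)) = C * norm (t *\<^sub>R ((1/t) *\<^sub>R y + x0))"
        using 2 by simp
      moreover have "t *\<^sub>R ((1/t) *\<^sub>R y + x0) = x" using 2 h by (simp add: algebra_simps)
      moreover have "t * ((1/t) * a1 + c) = a" using 2 h by (simp add: algebra_simps)
      ultimately show ?thesis by simp
    next
      case 3
      define s where "s = - t"
      have s0: "s > 0" using 3 s_def by simp
      have "((1/s) *\<^sub>R y, (1/s) * a1) \<in> g" using scl[OF h(1)] .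
      from c1[OF this] have "(1/s) * a1 - c \<le> C * norm ((1/s) *\<^sub>R y - x0)" by simp
      hence "s * ((1/s) * a1 - c) \<le> s * (C * norm ((1/s) *\<^sub>R y - x0))"
        using s0 by (simp add: mult_left_mono)
      moreover have "s * (C * norm ((1/s) *\<^sub>R y - x0)) = C * norm (s *\<^sub>R ((1/s) *\<^sub>R y - x0))"
        using s0 by simp
      moreover have "s *\<^sub>R ((1/s) *\<^sub>R y - x0) = x" using s0 h s_def by (simp add: algebra_simps)
      moreover have "s * ((1/s) * a1 - c) = a" using s0 h s_def by (simp add: algebra_simps)
      ultimately show ?thesis by simp
    qed
  qed
  moreover have "g \<subseteq> g'"
  proof
    fix p assume "p \<in> g"
    then obtain y a where "p = (y,a)" "(y,a)\<in>g" by (cases p) auto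
    thus "p \<in> g'" unfolding g'_def by (metis (mono_tags, lifting) add_0 mem_Collect_eq mult_zero_left scale_zero_left add.right_neutral)
  qed
  moreover have "(x0, c) \<in> g'" unfolding g'_def using zero by force
  hence "g' \<noteq> g" using dom by force
  ultimately show ?thesis by blast
qed

lemma good_graph_chain:
  assumes ne: "\<C> \<noteq> {}" and ch: "\<forall>X\<in>\<C>. \<forall>Y\<in>\<C>. X \<subseteq> Y \<or> Y \<subseteq> X"
    and gd: "\<forall>g\<in>\<C>. good_graph C g"
  shows "good_graph C (\<Union>\<C>)"
proof -
  have two: "\<exists>Z\<in>\<C>. p \<in> Z \<and> q \<in> Z" if hpq: "p \<in> \<Union>\<C>" "q \<in> \<Union>\<C>" for p q
  proof -
    obtain X Y where XY: "X\<in>\<C>" "Y\<in>\<C>" "p\<in>X" "q\<in>Y" using hpq by blast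
    show ?thesis
    proof (cases "X \<subseteq> Y")
      case True thus ?thesis using XY by blast
    next
      case False hence "Y \<subseteq> X" using ch XY(1,2) by blast
      thus ?thesis using XY by blast
    qed
  qed
  have G: "\<And>g. g \<in> \<C> \<Longrightarrow> good_graph C g" using gd by blast
  show ?thesis
  unfolding good_graph_def
  proof (intro conjI allI impI)
    fix x a b assume "(x,a)\<in>\<Union>\<C>" "(x,b)\<in>\<Union>\<C>"
    then obtain Z where "Z\<in>\<C>" "(x,a)\<in>Z" "(x,b)\<in>Z" using two by blast
    with G[OF \<open>Z\<in>\<C>\<close>] show "a = b" unfolding good_graph_def by blast
  next
    obtain X where "X\<in>\<C>" using ne by blast
    with G[OF this] show "(0,0)\<in>\<Union>\<C>" unfolding good_graph_def by blast
  next
    fix x a y b assume "(x,a)\<in>\<Union>\<C>" "(y,b)\<in>\<Union>\<C>"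
    then obtain Z where "Z\<in>\<C>" "(x,a)\<in>Z" "(y,b)\<in>Z" using two by blast
    with G[OF \<open>Z\<in>\<C>\<close>] have "(x+y, a+b)\<in>Z" unfolding good_graph_def by blast
    thus "(x+y, a+b)\<in>\<Union>\<C>" using \<open>Z\<in>\<C>\<close> by blast
  next
    fix x a c assume "(x,a)\<in>\<Union>\<C>"
    then obtain Z where "Z\<in>\<C>" "(x,a)\<in>Z" by blast
    with G[OF \<open>Z\<in>\<C>\<close>] have "(c *\<^sub>R x, c*a)\<in>Z" unfolding good_graph_def by blast
    thus "(c *\<^sub>R x, c*a)\<in>\<Union>\<C>" using \<open>Z\<in>\<C>\<close> by blast
  next
    fix x a assume "(x,a)\<in>\<Union>\<C>"
    then obtain Z where "Z\<in>\<C>" "(x,a)\<in>Z" by blast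
    with G[OF \<open>Z\<in>\<C>\<close>] show "a \<le> C * norm x" unfolding good_graph_def by blast
  qed
qed

lemma infdist_scale_bound:
  fixes Z :: "'a::real_normed_vector set"
  assumes "subspace Z" "z \<in> Z"
  shows "\<bar>t\<bar> * infdist x0 Z \<le> norm (z + t *\<^sub>R x0)"
proof (cases "t = 0")
  case True thus ?thesis by simp
next
  case False
  have "- ((1/t) *\<^sub>R z) \<in> Z" using assms by (simp add: subspace_neg subspace_scale)
  hence "infdist x0 Z \<le> dist x0 (- ((1/t) *\<^sub>R z))" by (rule infdist_le)
  also have "\<dots> = norm (x0 + (1/t) *\<^sub>R z)" by (simp add: dist_norm)
  finally have "\<bar>t\<bar> * infdist x0 Z \<le> \<bar>t\<bar> * norm (x0 + (1/t) *\<^sub>R z)"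
    by (simp add: mult_left_mono)
  also have "\<dots> = norm (t *\<^sub>R (x0 + (1/t) *\<^sub>R z))" by simp
  also have "t *\<^sub>R (x0 + (1/t) *\<^sub>R z) = z + t *\<^sub>R x0" using False by (simp add: algebra_simps)
  finally show ?thesis .
qed

lemma real_HB:
  fixes Z :: "'a::real_normed_vector set"
  assumes sZ: "subspace Z" and cZ: "closed Z" and x0: "x0 \<notin> Z"
  shows "\<exists>\<phi>::'a\<Rightarrow>real. bounded_linear \<phi> \<and> (\<forall>z\<in>Z. \<phi> z = 0) \<and> \<phi> x0 = 1"
proof -
  have "0 \<in> Z" using sZ by (simp add: subspace_0)
  hence dpos: "infdist x0 Z > 0" using infdist_pos_not_in_closed[OF cZ _ x0] by blast
  define C where "C = 1 / infdist x0 Z"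
  have C0: "C \<ge> 0" using dpos C_def by simp
  define g0 where "g0 = {(z + t *\<^sub>R x0, t) | z t. z \<in> Z}"
  have g0m: "\<exists>z t. z \<in> Z \<and> x = z + t *\<^sub>R x0 \<and> a = t" if "(x,a)\<in>g0" for x a
    using that unfolding g0_def by blast
  have g0i: "(z + t *\<^sub>R x0, t) \<in> g0" if "z \<in> Z" for z t using that unfolding g0_def by blast
  have tt: "t = t'" if "z \<in> Z" "z' \<in> Z" "z + t *\<^sub>R x0 = z' + t' *\<^sub>R x0" for z z' t t'
  proof (rule ccontr)
    assume ne: "t \<noteq> t'"
    have "z' - z = (t - t') *\<^sub>R x0" using that(3) by (simp add: algebra_simps)
    hence "x0 = (1/(t - t')) *\<^sub>R (z' - z)" using ne by simp
    moreover have "(1/(t - t')) *\<^sub>R (z' - z) \<in> Z" using sZ that by (simp add: subspace_diff subspace_scale)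
    ultimately show False using x0 by simp
  qed
  have gg0: "good_graph C g0"
    unfolding good_graph_def
  proof (intro conjI allI impI)
    fix x a b assume "(x,a)\<in>g0" "(x,b)\<in>g0"
    then obtain z t z' t' where "z\<in>Z" "z'\<in>Z" "x = z + t *\<^sub>R x0" "a = t" "x = z' + t' *\<^sub>R x0" "b = t'"
      using g0m by metis
    thus "a = b" using tt by metis
  next
    show "(0,0) \<in> g0" using g0i[OF \<open>0\<in>Z\<close>, of 0] by simp
  next
    fix x a y b assume "(x,a)\<in>g0" "(y,b)\<in>g0"
    then obtain z t z' t' where h: "z\<in>Z" "z'\<in>Z" "x = z + t *\<^sub>R x0" "a = t" "y = z' + t' *\<^sub>R x0" "b = t'"
      using g0m by metis
    have "x + y = (z + z') + (t + t') *\<^sub>R x0" using h by (simp add: algebra_simps)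
    moreover have "z + z' \<in> Z" using h sZ by (simp add: subspace_add)
    ultimately show "(x+y, a+b)\<in>g0" using g0i h(4,6) by metis
  next
    fix x a c assume "(x,a)\<in>g0"
    then obtain z t where h: "z\<in>Z" "x = z + t *\<^sub>R x0" "a = t" using g0m by metis
    have "c *\<^sub>R x = c *\<^sub>R z + (c * t) *\<^sub>R x0" using h by (simp add: algebra_simps)
    moreover have "c *\<^sub>R z \<in> Z" using h sZ by (simp add: subspace_scale)
    ultimately show "(c *\<^sub>R x, c*a)\<in>g0" using g0i h(3) by metis
  next
    fix x a assume "(x,a)\<in>g0"
    then obtain z t where h: "z\<in>Z" "x = z + t *\<^sub>R x0" "a = t" using g0m by metis
    have "\<bar>t\<bar> * infdist x0 Z \<le> norm x" using infdist_scale_bound[OF sZ h(1)] h by simp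
    hence "\<bar>t\<bar> \<le> norm x / infdist x0 Z" using dpos by (simp add: field_simps)
    thus "a \<le> C * norm x" using h C_def by simp
  qed
  define \<A> where "\<A> = {g. good_graph C g \<and> g0 \<subseteq> g}"
  have "\<exists>M\<in>\<A>. \<forall>X\<in>\<A>. M \<subseteq> X \<longrightarrow> X = M"
  proof (rule subset_Zorn_nonempty)
    show "\<A> \<noteq> {}" using gg0 \<A>_def by blast
  next
    fix \<C> assume "\<C> \<noteq> {}" "subset.chain \<A> \<C>"
    hence ch: "\<C> \<subseteq> \<A>" "\<forall>X\<in>\<C>. \<forall>Y\<in>\<C>. X \<subseteq> Y \<or> Y \<subseteq> X" by (auto simp: subset_chain_def)
    have "good_graph C (\<Union>\<C>)"
      by (rule good_graph_chain[OF \<open>\<C> \<noteq> {}\<close> ch(2)]) (use ch(1) \<A>_def in blast)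
    moreover have "g0 \<subseteq> \<Union>\<C>" using \<open>\<C> \<noteq> {}\<close> ch(1) \<A>_def by blast
    ultimately show "\<Union>\<C> \<in> \<A>" using \<A>_def by blast
  qed
  then obtain M where MA: "M \<in> \<A>" and Mmax: "\<forall>X\<in>\<A>. M \<subseteq> X \<longrightarrow> X = M" by blast
  have gM: "good_graph C M" and g0M: "g0 \<subseteq> M" using MA \<A>_def by auto
  have dom: "\<exists>a. (x,a) \<in> M" for x
  proof (rule ccontr)
    assume "\<nexists>a. (x,a) \<in> M"
    hence "x \<notin> fst ` M" by force
    from good_graph_ext[OF gM this C0] obtain g' where "good_graph C g'" "M \<subseteq> g'" "g' \<noteq> M" by blast
    thus False using Mmax g0M \<A>_def by blast
  qed
  have fn: "\<And>x a b. (x,a)\<in>M \<Longrightarrow> (x,b)\<in>M \<Longrightarrow> a = b"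
    and add: "\<And>x a y b. (x,a)\<in>M \<Longrightarrow> (y,b)\<in>M \<Longrightarrow> (x+y, a+b)\<in>M"
    and scl: "\<And>x a c. (x,a)\<in>M \<Longrightarrow> (c *\<^sub>R x, c*a)\<in>M"
    and bnd: "\<And>x a. (x,a)\<in>M \<Longrightarrow> a \<le> C * norm x"
    using gM unfolding good_graph_def by blast+
  define \<phi> where "\<phi> x = (THE a. (x,a) \<in> M)" for x
  have phiM: "(x, \<phi> x) \<in> M" for x
    unfolding \<phi>_def using dom[of x] fn by (metis theI)
  have phiE: "\<phi> x = a" if "(x,a)\<in>M" for x a using fn[OF that phiM] by simp
  have lin1: "\<phi> (x + y) = \<phi> x + \<phi> y" for x y using phiE[OF add[OF phiM phiM]] .
  have lin2: "\<phi> (r *\<^sub>R x) = r *\<^sub>R \<phi> x" for r x using phiE[OF scl[OF phiM]] by simp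
  have nb: "norm (\<phi> x) \<le> norm x * C" for x
  proof -
    have "\<phi> x \<le> C * norm x" using bnd[OF phiM] .
    moreover have "- \<phi> x \<le> C * norm x"
      using bnd[OF phiM, of "(-1) *\<^sub>R x"] lin2[of "-1" x] by simp
    ultimately show ?thesis by (simp add: abs_le_iff mult.commute)
  qed
  have bl: "bounded_linear \<phi>" by (rule bounded_linear_intro[OF lin1 lin2 nb])
  have "\<phi> z = 0" if "z \<in> Z" for z using phiE[of z 0] g0M g0i[OF that, of 0] by auto
  moreover have "\<phi> x0 = 1" using phiE[of x0 1] g0M g0i[OF \<open>0\<in>Z\<close>, of 1] by auto
  ultimately show ?thesis using bl by blast
qed




lemma cs_linear: "complex_structure CJ \<Longrightarrow> linear CJ"
  unfolding complex_structure_def by blast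
lemma cs_sq: "complex_structure CJ \<Longrightarrow> CJ (CJ x) = - x"
  unfolding complex_structure_def by blast
lemma cs_norm: "complex_structure CJ \<Longrightarrow> norm (CJ x) = norm x"
  unfolding complex_structure_def
  by (metis add_0 cos_pi_half scaleR_one scaleR_zero_left sin_pi_half)
lemma cs_bl: assumes "complex_structure CJ" shows "bounded_linear CJ"
proof (rule bounded_linear_intro[where K=1])
  show "CJ (x + y) = CJ x + CJ y" for x y using cs_linear[OF assms] by (simp add: linear_add)
  show "CJ (r *\<^sub>R x) = r *\<^sub>R CJ x" for r x using cs_linear[OF assms] by (simp add: linear_scale)
  show "norm (CJ x) \<le> norm x * 1" for x using cs_norm[OF assms] by simp
qed

lemma closed_plus_line:
  fixes Z :: "'a::real_normed_vector set"
  assumes sZ: "subspace Z" and cZ: "closed Z"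
  shows "closed {z + t *\<^sub>R b | z t. z \<in> Z}" "subspace {z + t *\<^sub>R b | z t. z \<in> Z}"
proof -
  show "subspace {z + t *\<^sub>R b | z t. z \<in> Z}"
    unfolding subspace_def
  proof (intro conjI allI impI ballI)
    have "0 \<in> Z" using sZ by (simp add: subspace_0)
    thus "0 \<in> {z + t *\<^sub>R b | z t. z \<in> Z}" by (intro CollectI exI[of _ 0] exI[of _ "0::real"]) simp
  next
    fix x y assume "x \<in> {z + t *\<^sub>R b | z t. z \<in> Z}" "y \<in> {z + t *\<^sub>R b | z t. z \<in> Z}"
    then obtain z1 t1 z2 t2 where "z1\<in>Z" "z2\<in>Z" "x = z1 + t1 *\<^sub>R b" "y = z2 + t2 *\<^sub>R b" by blast
    moreover have "z1 + z2 \<in> Z" using calculation sZ by (simp add: subspace_add)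
    ultimately show "x + y \<in> {z + t *\<^sub>R b | z t. z \<in> Z}"
      by (intro CollectI exI[of _ "z1+z2"] exI[of _ "t1+t2"]) (simp add: algebra_simps)
  next
    fix c x assume "x \<in> {z + t *\<^sub>R b | z t. z \<in> Z}"
    then obtain z1 t1 where "z1\<in>Z" "x = z1 + t1 *\<^sub>R b" by blast
    moreover have "c *\<^sub>R z1 \<in> Z" using calculation sZ by (simp add: subspace_scale)
    ultimately show "c *\<^sub>R x \<in> {z + t *\<^sub>R b | z t. z \<in> Z}"
      by (intro CollectI exI[of _ "c *\<^sub>R z1"] exI[of _ "c*t1"]) (simp add: algebra_simps)
  qed
  show "closed {z + t *\<^sub>R b | z t. z \<in> Z}"
  proof (cases "b \<in> Z")
    case True
    have "{z + t *\<^sub>R b | z t. z \<in> Z} = Z"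
    proof
      show "{z + t *\<^sub>R b | z t. z \<in> Z} \<subseteq> Z" using True sZ
        by (auto simp: subspace_add subspace_scale)
      show "Z \<subseteq> {z + t *\<^sub>R b | z t. z \<in> Z}" by (force)
    qed
    thus ?thesis using cZ by simp
  next
    case False
    obtain \<phi> :: "'a \<Rightarrow> real" where phi: "bounded_linear \<phi>" "\<forall>z\<in>Z. \<phi> z = 0" "\<phi> b = 1"
      using real_HB[OF sZ cZ False] by blast
    have "bounded_linear (\<lambda>v. \<phi> v *\<^sub>R b)"
      by (rule bounded_linear_compose[OF bounded_linear_scaleR_left phi(1)])
    hence bl: "bounded_linear (\<lambda>v. v - \<phi> v *\<^sub>R b)"
      by (intro bounded_linear_sub bounded_linear_ident)
    have eq: "{z + t *\<^sub>R b | z t. z \<in> Z} = (\<lambda>v. v - \<phi> v *\<^sub>R b) -` Z"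
    proof
      show "{z + t *\<^sub>R b | z t. z \<in> Z} \<subseteq> (\<lambda>v. v - \<phi> v *\<^sub>R b) -` Z"
      proof
        fix x assume "x \<in> {z + t *\<^sub>R b | z t. z \<in> Z}"
        then obtain z t where h: "z \<in> Z" "x = z + t *\<^sub>R b" by blast
        have "\<phi> x = t" using h phi bounded_linear.linear[OF phi(1)]
          by (simp add: linear_add linear_scale)
        thus "x \<in> (\<lambda>v. v - \<phi> v *\<^sub>R b) -` Z" using h by simp
      qed
      show "(\<lambda>v. v - \<phi> v *\<^sub>R b) -` Z \<subseteq> {z + t *\<^sub>R b | z t. z \<in> Z}"
      proof
        fix x assume "x \<in> (\<lambda>v. v - \<phi> v *\<^sub>R b) -` Z"
        hence "x - \<phi> x *\<^sub>R b \<in> Z" by simp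
        thus "x \<in> {z + t *\<^sub>R b | z t. z \<in> Z}"
          by (intro CollectI exI[of _ "x - \<phi> x *\<^sub>R b"] exI[of _ "\<phi> x"]) simp
      qed
    qed
    show ?thesis unfolding eq
      by (rule continuous_closed_vimage[OF cZ]) (rule linear_continuous_at[OF bl])
  qed
qed

definition psum :: "'a::real_vector set \<Rightarrow> 'a set \<Rightarrow> 'a set" where
  "psum Y B = {y + w | y w. y \<in> Y \<and> w \<in> span B}"

lemma psum_insert: "psum Y (insert b B) = {z + t *\<^sub>R b | z t. z \<in> psum Y B}"
proof
  show "psum Y (insert b B) \<subseteq> {z + t *\<^sub>R b | z t. z \<in> psum Y B}"
  proof
    fix x assume "x \<in> psum Y (insert b B)"
    then obtain y w where h: "y \<in> Y" "w \<in> span (insert b B)" "x = y + w" unfolding psum_def by blast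
    then obtain k where "w - k *\<^sub>R b \<in> span B" using span_breakdown_eq by blast
    hence "y + (w - k *\<^sub>R b) \<in> psum Y B" using h unfolding psum_def by blast
    moreover have "x = (y + (w - k *\<^sub>R b)) + k *\<^sub>R b" using h by simp
    ultimately show "x \<in> {z + t *\<^sub>R b | z t. z \<in> psum Y B}" by blast
  qed
  show "{z + t *\<^sub>R b | z t. z \<in> psum Y B} \<subseteq> psum Y (insert b B)"
  proof
    fix x assume "x \<in> {z + t *\<^sub>R b | z t. z \<in> psum Y B}"
    then obtain y w t where h: "y \<in> Y" "w \<in> span B" "x = y + w + t *\<^sub>R b" unfolding psum_def by blast
    have "w + t *\<^sub>R b \<in> span (insert b B)"
      using h(2) by (meson span_add span_base span_mono span_scale insertI1 subset_insertI subsetD)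
    thus "x \<in> psum Y (insert b B)" using h unfolding psum_def by (force simp: add.assoc)
  qed
qed

lemma closed_psum:
  fixes Y :: "'a::real_normed_vector set"
  assumes "subspace Y" "closed Y" "finite B"
  shows "closed (psum Y B) \<and> subspace (psum Y B)"
  using assms(3)
proof (induction B rule: finite_induct)
  case empty
  have "psum Y {} = Y" unfolding psum_def by auto
  thus ?case using assms by simp
next
  case (insert b B)
  thus ?case using closed_plus_line[of "psum Y B" b] by (simp add: psum_insert)
qed

lemma psum_sub1: "Y \<subseteq> psum Y B"
proof
  fix y assume "y \<in> Y"
  thus "y \<in> psum Y B" unfolding psum_def by (intro CollectI exI[of _ y] exI[of _ 0]) (simp add: span_0)
qed
lemma psum_sub2: "subspace Y \<Longrightarrow> span B \<subseteq> psum Y B"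
proof
  fix w assume "subspace Y" "w \<in> span B"
  thus "w \<in> psum Y B" unfolding psum_def by (intro CollectI exI[of _ 0] exI[of _ w]) (simp add: subspace_0)
qed

lemma complex_HB:
  fixes Y :: "'a::real_normed_vector set"
  assumes cs: "complex_structure CJ" and sY: "subspace Y" and cY: "closed Y"
    and iY: "CJ ` Y \<subseteq> Y" and x0: "x0 \<notin> Y"
  shows "\<exists>f\<in>cdual CJ. (\<forall>y\<in>Y. f y = 0) \<and> f x0 = 1"
proof -
  obtain \<phi> :: "'a \<Rightarrow> real" where phi: "bounded_linear \<phi>" "\<forall>z\<in>Y. \<phi> z = 0" "\<phi> x0 = 1"
    using real_HB[OF sY cY x0] by blast
  define lam where "lam = complex_of_real 1 - \<i> * complex_of_real (\<phi> (CJ x0))"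
  have "Re lam = 1" unfolding lam_def by simp
  hence lam0: "lam \<noteq> 0" by auto
  define f where "f x = (complex_of_real (\<phi> x) - \<i> * complex_of_real (\<phi> (CJ x))) / lam" for x
  have blc: "bounded_linear (\<lambda>x. complex_of_real (\<phi> x))"
    using bounded_linear_compose[OF bounded_linear_of_real phi(1)] by (simp add: o_def)
  have blc2: "bounded_linear (\<lambda>x. complex_of_real (\<phi> (CJ x)))"
    using bounded_linear_compose[OF blc cs_bl[OF cs]] by (simp add: o_def)
  have "bounded_linear (\<lambda>x. (complex_of_real (\<phi> x) - \<i> * complex_of_real (\<phi> (CJ x))) / lam)"
    by (rule bounded_linear_compose[OF bounded_linear_divide bounded_linear_sub[OF blc bounded_linear_compose[OF bounded_linear_mult_right blc2]]])
  hence bl: "bounded_linear f" unfolding f_def by simp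
  have lp: "linear \<phi>" using phi(1) bounded_linear.linear by blast
  have "f (CJ x) = \<i> * f x" for x
  proof -
    have "\<phi> (CJ (CJ x)) = - \<phi> x" using cs_sq[OF cs] lp by (simp add: linear_neg)
    thus ?thesis unfolding f_def by (simp add: algebra_simps add_divide_distrib diff_divide_distrib)
  qed
  hence "f \<in> cdual CJ" unfolding cdual_def using bl by blast
  moreover have "\<forall>y\<in>Y. f y = 0" using phi(2) iY unfolding f_def by auto
  moreover have "f x0 = 1" unfolding f_def lam_def using phi(3) lam0 lam_def by simp
  ultimately show ?thesis by blast
qed




definition FR :: "('a::real_normed_vector \<Rightarrow> 'a) \<Rightarrow> 'a set set \<Rightarrow> ('a \<Rightarrow> 'a) set" where
  "FR CJ N = {A \<in> nest_alg CJ N. finite_rank A}"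

lemma nest_D: assumes "nest CJ N"
  shows "\<forall>E\<in>N. closed_csubspace CJ E" "\<forall>E\<in>N. \<forall>F\<in>N. E \<subseteq> F \<or> F \<subseteq> E"
    "{0} \<in> N" "\<forall>S\<subseteq>N. closure (span (\<Union>S)) \<in> N"
  using assms unfolding nest_def by simp_all

lemma nest_mem:
  assumes "nest CJ N" "H \<in> N"
  shows "subspace H" "closed H" "CJ ` H \<subseteq> H"
proof -
  have "closed_csubspace CJ H" using nest_D(1)[OF assms(1)] assms(2) by simp
  thus "subspace H" "closed H" "CJ ` H \<subseteq> H" unfolding closed_csubspace_def by simp_all
qed

lemma nest_chain: "nest CJ N \<Longrightarrow> H \<in> N \<Longrightarrow> K \<in> N \<Longrightarrow> H \<subseteq> K \<or> K \<subseteq> H"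
  using nest_D(2) by metis

lemma nest_zero: "nest CJ N \<Longrightarrow> {0} \<in> N"
  using nest_D(3) by metis

lemma nest_join: "nest CJ N \<Longrightarrow> S \<subseteq> N \<Longrightarrow> closure (span (\<Union>S)) \<in> N"
  using nest_D(4) by metis

lemma chain_union_subspace:
  assumes nN: "nest CJ N" and S: "S \<subseteq> N" "S \<noteq> {}"
  shows "subspace (\<Union>S)"
  unfolding subspace_def
proof (intro conjI ballI allI)
  obtain H where "H \<in> S" using S by blast
  thus "0 \<in> \<Union>S" using nest_mem[OF nN] S subspace_0 by blast
next
  fix x y assume "x \<in> \<Union>S" "y \<in> \<Union>S"
  then obtain H K where HK: "H\<in>S" "K\<in>S" "x\<in>H" "y\<in>K" by blast
  have "H \<subseteq> K \<or> K \<subseteq> H" using nest_chain[OF nN] HK S by blast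
  thus "x + y \<in> \<Union>S"
  proof
    assume "H \<subseteq> K" thus ?thesis using HK nest_mem[OF nN, of K] S by (blast intro: subspace_add)
  next
    assume "K \<subseteq> H" thus ?thesis using HK nest_mem[OF nN, of H] S by (blast intro: subspace_add)
  qed
next
  fix c x assume "x \<in> \<Union>S"
  then obtain H where "H\<in>S" "x\<in>H" by blast
  thus "c *\<^sub>R x \<in> \<Union>S" using nest_mem[OF nN, of H] S by (blast intro: subspace_scale)
qed

lemma finite_in_chain:
  assumes nN: "nest CJ N" and S: "S \<subseteq> N" "S \<noteq> {}" and fF: "finite F"
  shows "F \<subseteq> \<Union>S \<Longrightarrow> \<exists>H\<in>S. F \<subseteq> H"
  using fF
proof (induction F rule: finite_induct)
  case empty thus ?case using S by blast
next
  case (insert x F)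
  then obtain H where H: "H\<in>S" "F \<subseteq> H" by blast
  obtain K where K: "K\<in>S" "x\<in>K" using insert by blast
  have "H \<subseteq> K \<or> K \<subseteq> H" using nest_chain[OF nN] H K S by blast
  thus ?case using H K by blast
qed

lemma bops_CJ: "A \<in> bops CJ \<Longrightarrow> A (CJ x) = CJ (A x)"
  unfolding bops_def by blast

lemma bops_lin: "A \<in> bops CJ \<Longrightarrow> linear A"
  unfolding bops_def using bounded_linear.linear by blast

lemma FR_bops: "A \<in> FR CJ N \<Longrightarrow> A \<in> bops CJ"
  unfolding FR_def nest_alg_def by blast

lemma FR_inv: "A \<in> FR CJ N \<Longrightarrow> H \<in> N \<Longrightarrow> x \<in> H \<Longrightarrow> A x \<in> H"
  unfolding FR_def nest_alg_def by blast

lemma cscale_mem: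
  assumes "subspace H" "CJ ` H \<subseteq> H" "u \<in> H"
  shows "cscale CJ c u \<in> H"
  unfolding cscale_def using assms by (blast intro: subspace_add subspace_scale)

lemma rank1_FR:
  assumes cs: "complex_structure CJ" and nN: "nest CJ N" and f: "f \<in> cdual CJ"
    and R: "\<forall>H\<in>N. u \<in> H \<or> (\<forall>y\<in>H. f y = 0)"
  shows "(\<lambda>y. cscale CJ (f y) u) \<in> FR CJ N"
proof -
  have bf: "bounded_linear f" and fi: "\<And>x. f (CJ x) = \<i> * f x" using f unfolding cdual_def by blast+
  have b1: "bounded_linear (\<lambda>y. Re (f y) *\<^sub>R u)"
    by (rule bounded_linear_compose[OF bounded_linear_scaleR_left bounded_linear_compose[OF bounded_linear_Re bf]])
  have b2: "bounded_linear (\<lambda>y. Im (f y) *\<^sub>R CJ u)"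
    by (rule bounded_linear_compose[OF bounded_linear_scaleR_left bounded_linear_compose[OF bounded_linear_Im bf]])
  have bl: "bounded_linear (\<lambda>y. cscale CJ (f y) u)"
    unfolding cscale_def by (rule bounded_linear_add[OF b1 b2])
  have lCJ: "linear CJ" using cs_linear[OF cs] .
  have com: "cscale CJ (f (CJ x)) u = CJ (cscale CJ (f x) u)" for x
    unfolding cscale_def fi using lCJ cs_sq[OF cs, of u]
    by (simp add: linear_add linear_scale)
  have inB: "(\<lambda>y. cscale CJ (f y) u) \<in> bops CJ" unfolding bops_def using bl com by blast
  have inv: "(\<lambda>y. cscale CJ (f y) u) ` H \<subseteq> H" if "H \<in> N" for H
  proof -
    have sH: "subspace H" "CJ ` H \<subseteq> H" using nest_mem[OF nN that] by blast+
    show ?thesis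
    proof (cases "u \<in> H")
      case True thus ?thesis using cscale_mem[OF sH True] by blast
    next
      case False
      hence "\<forall>y\<in>H. f y = 0" using R that by blast
      thus ?thesis using sH(1) by (auto simp: cscale_def subspace_0)
    qed
  qed
  have fr: "finite_rank (\<lambda>y. cscale CJ (f y) u)"
    unfolding finite_rank_def
  proof (intro exI conjI)
    show "finite {u, CJ u}" by simp
    show "range (\<lambda>y. cscale CJ (f y) u) \<subseteq> span {u, CJ u}"
    proof
      fix z assume "z \<in> range (\<lambda>y. cscale CJ (f y) u)"
      then obtain y where "z = Re (f y) *\<^sub>R u + Im (f y) *\<^sub>R CJ u" unfolding cscale_def by blast
      moreover have "u \<in> span {u, CJ u}" "CJ u \<in> span {u, CJ u}" by (simp_all add: span_base)
      ultimately show "z \<in> span {u, CJ u}" by (metis span_add span_scale)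
    qed
  qed
  have "(\<lambda>y. cscale CJ (f y) u) \<in> nest_alg CJ N" unfolding nest_alg_def using inB inv by simp
  thus ?thesis unfolding FR_def using fr by simp
qed

lemma FR_add:
  assumes cs: "complex_structure CJ" and nN: "nest CJ N"
    and A: "A \<in> FR CJ N" and B: "B \<in> FR CJ N"
  shows "(\<lambda>x. A x + B x) \<in> FR CJ N"
proof -
  have bA: "bounded_linear A" "\<And>x. A (CJ x) = CJ (A x)" using A unfolding FR_def nest_alg_def bops_def by blast+
  have bB: "bounded_linear B" "\<And>x. B (CJ x) = CJ (B x)" using B unfolding FR_def nest_alg_def bops_def by blast+
  have b1: "bounded_linear (\<lambda>x. A x + B x)" by (rule bounded_linear_add[OF bA(1) bB(1)])
  have b2: "\<forall>x. A (CJ x) + B (CJ x) = CJ (A x + B x)"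
    using bA(2) bB(2) linear_add[OF cs_linear[OF cs]] by metis
  have "(\<lambda>x. A x + B x) \<in> bops CJ" unfolding bops_def using b1 b2 by (intro CollectI conjI) auto
  moreover have "\<forall>H\<in>N. (\<lambda>x. A x + B x) ` H \<subseteq> H"
  proof (intro ballI subsetI)
    fix H z assume H: "H \<in> N" and z: "z \<in> (\<lambda>x. A x + B x) ` H"
    then obtain x where x: "x \<in> H" "z = A x + B x" by blast
    show "z \<in> H" unfolding x(2)
      by (rule subspace_add[OF nest_mem(1)[OF nN H] FR_inv[OF A H x(1)] FR_inv[OF B H x(1)]])
  qed
  moreover have "finite_rank (\<lambda>x. A x + B x)"
  proof -
    obtain F1 where f1: "finite F1" "range A \<subseteq> span F1" using A unfolding FR_def finite_rank_def by blast
    obtain F2 where f2: "finite F2" "range B \<subseteq> span F2" using B unfolding FR_def finite_rank_def by blast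
    have s1: "span F1 \<subseteq> span (F1 \<union> F2)" "span F2 \<subseteq> span (F1 \<union> F2)" by (simp_all add: span_mono)
    have "range (\<lambda>x. A x + B x) \<subseteq> span (F1 \<union> F2)"
    proof (rule subsetI)
      fix z assume "z \<in> range (\<lambda>x. A x + B x)"
      then obtain x where z: "z = A x + B x" by blast
      have "A x \<in> span (F1 \<union> F2)" using s1(1) f1(2) by blast
      moreover have "B x \<in> span (F1 \<union> F2)" using s1(2) f2(2) by blast
      ultimately show "z \<in> span (F1 \<union> F2)" unfolding z by (rule span_add)
    qed
    moreover have "finite (F1 \<union> F2)" using f1 f2 by blast
    ultimately show ?thesis unfolding finite_rank_def by blast
  qed
  ultimately show ?thesis unfolding FR_def nest_alg_def by (intro CollectI conjI) auto
qed

lemma FR_zero: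
  assumes "nest CJ N" "complex_structure CJ"
  shows "(\<lambda>x. 0) \<in> FR CJ N"
proof -
  have "(\<lambda>x. 0) \<in> bops CJ" unfolding bops_def using cs_linear[OF assms(2)] by (simp add: linear_0)
  moreover have "(\<lambda>x. 0) ` H \<subseteq> H" if "H \<in> N" for H using nest_mem[OF assms(1) that] by (auto simp: subspace_0)
  moreover have "finite_rank (\<lambda>x. 0)" unfolding finite_rank_def by (intro exI[of _ "{}"]) auto
  ultimately show ?thesis unfolding FR_def nest_alg_def by simp
qed




lemma psum_inv:
  assumes cs: "complex_structure CJ" and "CJ ` G \<subseteq> G" "CJ ` span C \<subseteq> span C"
  shows "CJ ` psum G C \<subseteq> psum G C"
proof
  fix p assume "p \<in> CJ ` psum G C"
  then obtain g w where h: "g \<in> G" "w \<in> span C" "p = CJ (g + w)" unfolding psum_def by blast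
  have "p = CJ g + CJ w" using h(3) linear_add[OF cs_linear[OF cs]] by simp
  moreover have "CJ g \<in> G" "CJ w \<in> span C" using h assms(2,3) by blast+
  ultimately show "p \<in> psum G C" unfolding psum_def by blast
qed

lemma approx_y:
  assumes cs: "complex_structure CJ" and nN: "nest CJ N"
    and fC: "finite C" and iC: "CJ ` span C \<subseteq> span C" and CB: "span C \<subseteq> span B"
    and y0C: "y0 \<notin> span C" and y0B: "y0 \<in> span B" and y00: "y0 \<noteq> 0"
    and top: "\<forall>H\<in>N. y0 \<in> H \<or> H \<inter> span B \<subseteq> span C"
    and IHC: "\<And>F' \<delta>'. finite F' \<Longrightarrow> F' \<subseteq> span C \<Longrightarrow> \<delta>' > 0 \<Longrightarrow> \<exists>A\<in>FR CJ N. \<forall>x\<in>F'. norm (A x - x) < \<delta>'"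
    and fF: "finite F'" and FC: "F' \<subseteq> span C" and d0: "\<delta>' > 0"
  shows "\<exists>A\<in>FR CJ N. (\<forall>x\<in>F'. norm (A x - x) < \<delta>') \<and> norm (A y0 - y0) \<le> 2 * \<delta>'"
proof -
  define S where "S = {H\<in>N. y0 \<notin> H}"
  have SN: "S \<subseteq> N" unfolding S_def by blast
  have S0: "{0} \<in> S" unfolding S_def using nest_zero[OF nN] y00 by simp
  have sS: "subspace (\<Union>S)" using chain_union_subspace[OF nN SN] S0 by blast
  define G where "G = closure (span (\<Union>S))"
  have GN: "G \<in> N" unfolding G_def by (rule nest_join[OF nN SN])
  have spS: "span (\<Union>S) = \<Union>S" using sS by (simp add: span_eq_iff)
  have sG: "subspace G" "closed G" "CJ ` G \<subseteq> G" using nest_mem[OF nN GN] by blast+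
  have SG: "H \<subseteq> G" if "H \<in> S" for H
  proof -
    have "H \<subseteq> \<Union>S" using that by (rule Union_upper)
    also have "\<dots> \<subseteq> closure (\<Union>S)" by (rule closure_subset)
    finally show ?thesis unfolding G_def spS .
  qed
  have finish: "\<exists>A\<in>FR CJ N. (\<forall>x\<in>F'. norm (A x - x) < \<delta>') \<and> norm (A y0 - y0) \<le> 2 * \<delta>'"
    if A': "A' \<in> FR CJ N" "\<forall>x\<in>F'. norm (A' x - x) < \<delta>'"
      and f: "f \<in> cdual CJ" "\<forall>w\<in>span C. f w = 0" "f y0 = 1"
      and R: "\<forall>H\<in>N. u \<in> H \<or> (\<forall>y\<in>H. f y = 0)"
      and est: "norm (A' y0 + u - y0) \<le> 2 * \<delta>'"
    for A' f u
  proof -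
    define A where "A = (\<lambda>x. A' x + cscale CJ (f x) u)"
    have "A \<in> FR CJ N" unfolding A_def by (rule FR_add[OF cs nN A'(1) rank1_FR[OF cs nN f(1) R]])
    moreover have "\<forall>x\<in>F'. norm (A x - x) < \<delta>'"
    proof
      fix x assume "x \<in> F'"
      hence "f x = 0" using f(2) FC by blast
      hence "A x = A' x" unfolding A_def cscale_def by simp
      thus "norm (A x - x) < \<delta>'" using A'(2) \<open>x \<in> F'\<close> by simp
    qed
    moreover have "A y0 = A' y0 + u" unfolding A_def cscale_def using f(3) by simp
    ultimately show ?thesis using est by metis
  qed
  define P where "P = psum G C"
  have cP: "closed P \<and> subspace P" unfolding P_def by (rule closed_psum[OF sG(1,2) fC])
  have iP: "CJ ` P \<subseteq> P" unfolding P_def by (rule psum_inv[OF cs sG(3) iC])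
  show ?thesis
  proof (cases "y0 \<in> P")
    case False
    obtain f where f: "f \<in> cdual CJ" "\<forall>y\<in>P. f y = 0" "f y0 = 1"
      using complex_HB[OF cs _ _ iP False] cP by blast
    obtain A' where A': "A' \<in> FR CJ N" "\<forall>x\<in>F'. norm (A' x - x) < \<delta>'" using IHC[OF fF FC d0] by blast
    have R: "\<forall>H\<in>N. y0 - A' y0 \<in> H \<or> (\<forall>y\<in>H. f y = 0)"
    proof
      fix H assume H: "H \<in> N"
      show "y0 - A' y0 \<in> H \<or> (\<forall>y\<in>H. f y = 0)"
      proof (cases "y0 \<in> H")
        case True
        hence "A' y0 \<in> H" using FR_inv[OF A'(1) H] by blast
        thus ?thesis using True nest_mem(1)[OF nN H] by (blast intro: subspace_diff)
      next
        case False
        hence "H \<in> S" using H S_def by blast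
        hence "H \<subseteq> P" using SG psum_sub1[of G C] P_def by blast
        thus ?thesis using f(2) by blast
      qed
    qed
    have fC: "\<forall>w\<in>span C. f w = 0" using f(2) psum_sub2[OF sG(1), of C] P_def by blast
    show ?thesis by (rule finish[OF A' f(1) fC f(3) R]) (simp add: d0 less_imp_le)
  next
    case True
    then obtain g w0 where gw: "g \<in> G" "w0 \<in> span C" "y0 = g + w0" unfolding P_def psum_def by blast
    obtain A' where A': "A' \<in> FR CJ N" "\<forall>x\<in>insert w0 F'. norm (A' x - x) < \<delta>'"
      using IHC[of "insert w0 F'"] fF FC gw(2) d0 by blast
    have lA: "linear A'" using bops_lin[OF FR_bops[OF A'(1)]] .
    define v where "v = g - A' g"
    have vG: "v \<in> G" unfolding v_def using FR_inv[OF A'(1) GN gw(1)] gw(1) sG(1) by (blast intro: subspace_diff)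
    then obtain z where z: "z \<in> \<Union>S" "dist z v < \<delta>'"
      using d0 unfolding G_def spS closure_approachable by blast
    then obtain H0 where H0: "H0 \<in> S" "z \<in> H0" by blast
    have H0N: "H0 \<in> N" and y0H0: "y0 \<notin> H0" using H0 S_def by blast+
    have sH0: "subspace H0" "closed H0" "CJ ` H0 \<subseteq> H0" using nest_mem[OF nN H0N] by blast+
    define Q where "Q = psum H0 C"
    have cQ: "closed Q \<and> subspace Q" unfolding Q_def by (rule closed_psum[OF sH0(1,2) fC])
    have iQ: "CJ ` Q \<subseteq> Q" unfolding Q_def by (rule psum_inv[OF cs sH0(3) iC])
    have y0Q: "y0 \<notin> Q"
    proof
      assume "y0 \<in> Q"
      then obtain h w where hw: "h \<in> H0" "w \<in> span C" "y0 = h + w" unfolding Q_def psum_def by blast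
      have "h = y0 - w" using hw by simp
      moreover have "w \<in> span B" using hw(2) CB by blast
      ultimately have "h \<in> span B" using y0B by (simp add: span_diff)
      hence "h \<in> span C" using top H0N y0H0 hw(1) by blast
      hence "y0 \<in> span C" using hw by (simp add: span_add)
      thus False using y0C by blast
    qed
    obtain f where f: "f \<in> cdual CJ" "\<forall>y\<in>Q. f y = 0" "f y0 = 1"
      using complex_HB[OF cs _ _ iQ y0Q] cQ by blast
    have R: "\<forall>H\<in>N. z \<in> H \<or> (\<forall>y\<in>H. f y = 0)"
    proof
      fix H assume H: "H \<in> N"
      have "H \<subseteq> H0 \<or> H0 \<subseteq> H" using nest_chain[OF nN H H0N] .
      thus "z \<in> H \<or> (\<forall>y\<in>H. f y = 0)"
      proof
        assume "H \<subseteq> H0"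
        hence "H \<subseteq> Q" using psum_sub1[of H0 C] Q_def by blast
        thus ?thesis using f(2) by blast
      next
        assume "H0 \<subseteq> H" thus ?thesis using H0 by blast
      qed
    qed
    have fC: "\<forall>w\<in>span C. f w = 0" using f(2) psum_sub2[OF sH0(1), of C] Q_def by blast
    have "A' y0 + z - y0 = (z - v) + (A' w0 - w0)"
      unfolding v_def gw(3) using linear_add[OF lA] by (simp add: algebra_simps)
    hence "norm (A' y0 + z - y0) \<le> norm (z - v) + norm (A' w0 - w0)" by (metis norm_triangle_ineq)
    moreover have "norm (z - v) < \<delta>'" using z(2) by (simp add: dist_norm)
    moreover have "norm (A' w0 - w0) < \<delta>'" using A'(2) by blast
    ultimately have est: "norm (A' y0 + z - y0) \<le> 2 * \<delta>'" by linarith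
    have A'F: "\<forall>x\<in>F'. norm (A' x - x) < \<delta>'" using A'(2) by blast
    show ?thesis by (rule finish[OF A'(1) A'F f(1) fC f(3) R est])
  qed
qed




lemma fin_basis:
  assumes "finite B" "subspace W" "W \<subseteq> span B"
  shows "\<exists>C. finite C \<and> W = span C"
proof -
  obtain C where C: "C \<subseteq> W" "independent C" "W \<subseteq> span C" "card C = dim W" by (rule basis_exists)
  have "finite C" using independent_span_bound[OF assms(1) C(2)] C(1) assms(3) by blast
  moreover have "span C \<subseteq> W" using C(1) assms(2) by (rule span_minimal)
  ultimately show ?thesis using C(3) by blast
qed

lemma dim_strict:
  assumes fB: "finite B" and s1: "subspace W1" and s2: "subspace W2" and sub: "W1 \<subseteq> W2"
    and W2B: "W2 \<subseteq> span B" and x: "x \<in> W2" "x \<notin> W1"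
  shows "dim W1 < dim W2"
proof -
  obtain C where C: "C \<subseteq> W1" "independent C" "W1 \<subseteq> span C" "card C = dim W1" by (rule basis_exists)
  have fC: "finite C" using independent_span_bound[OF fB C(2)] C(1) sub W2B by blast
  have "span C \<subseteq> W1" using C(1) s1 by (rule span_minimal)
  hence xC: "x \<notin> span C" using x by blast
  have ind: "independent (insert x C)" using independent_insertI[OF xC C(2)] .
  have cx: "card (insert x C) = dim W1 + 1" using fC xC C(4) span_base[of x C] by (simp add: card_insert_if) (metis span_base)
  obtain D where D: "D \<subseteq> W2" "independent D" "W2 \<subseteq> span D" "card D = dim W2" by (rule basis_exists)
  have fD: "finite D" using independent_span_bound[OF fB D(2)] D(1) W2B by blast
  have "insert x C \<subseteq> span D" using D(3) x(1) C(1) sub by blast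
  hence "card (insert x C) \<le> card D" using independent_span_bound[OF fD ind] by blast
  thus ?thesis using cx D(4) by simp
qed

lemma top_decomp:
  assumes cs: "complex_structure CJ" and nN: "nest CJ N" and fB: "finite B"
    and iB: "CJ ` span B \<subseteq> span B" and v0: "v0 \<in> span B" "v0 \<noteq> 0"
  shows "\<exists>y0 C. y0 \<in> span B \<and> y0 \<noteq> 0 \<and> finite C \<and> CJ ` span C \<subseteq> span C \<and> span C \<subseteq> span B \<and>
     y0 \<notin> span C \<and> (\<forall>H\<in>N. y0 \<in> H \<or> H \<inter> span B \<subseteq> span C) \<and>
     (\<forall>v\<in>span B. \<exists>w\<in>span C. \<exists>a b. v = w + a *\<^sub>R y0 + b *\<^sub>R CJ y0)"
proof -
  define V where "V = span B"
  have sV: "subspace V" unfolding V_def by (rule subspace_span)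
  have lCJ: "linear CJ" by (rule cs_linear[OF cs])
  define K where "K = {H\<in>N. \<not> V \<subseteq> H}"
  have KN: "K \<subseteq> N" unfolding K_def by blast
  have K0: "{0} \<in> K" unfolding K_def V_def using nest_zero[OF nN] v0 by blast
  define U where "U = \<Union>K"
  have sU: "subspace U" unfolding U_def using chain_union_subspace[OF nN KN] K0 by blast
  have iU: "CJ ` U \<subseteq> U" unfolding U_def using nest_mem(3)[OF nN] KN by blast
  have "\<not> V \<subseteq> U"
  proof
    assume "V \<subseteq> U"
    hence "B \<subseteq> \<Union>K" unfolding V_def U_def using span_superset by blast
    then obtain H where H: "H \<in> K" "B \<subseteq> H" using finite_in_chain[OF nN KN _ fB] K0 by blast
    have "subspace H" using nest_mem(1)[OF nN] H(1) KN by blast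
    hence "V \<subseteq> H" unfolding V_def using H(2) by (rule span_minimal[rotated])
    thus False using H(1) K_def by blast
  qed
  then obtain y0 where y0: "y0 \<in> V" "y0 \<notin> U" by blast
  have y00: "y0 \<noteq> 0" using y0 sU subspace_0 by blast
  define W0 where "W0 = U \<inter> V"
  define Wset where "Wset = {W. subspace W \<and> CJ ` W \<subseteq> W \<and> W0 \<subseteq> W \<and> W \<subseteq> V \<and> y0 \<notin> W}"
  have W0in: "W0 \<in> Wset" unfolding Wset_def W0_def using sU sV iU iB y0 V_def
    by (auto intro: subspace_inter)
  have bnd: "\<forall>k. (\<exists>W\<in>Wset. dim W = k) \<longrightarrow> k \<le> card B"
    using dim_le_card[OF _ fB] unfolding Wset_def V_def by blast
  obtain k where k: "\<exists>W\<in>Wset. dim W = k" "\<forall>k'. (\<exists>W\<in>Wset. dim W = k') \<longrightarrow> k' \<le> k"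
    using Nat.ex_has_greatest_nat[of "\<lambda>k. \<exists>W\<in>Wset. dim W = k", OF _ bnd] W0in by blast
  then obtain W where W: "W \<in> Wset" "dim W = k" by blast
  have sW: "subspace W" "CJ ` W \<subseteq> W" "W0 \<subseteq> W" "W \<subseteq> V" "y0 \<notin> W" using W(1) unfolding Wset_def by blast+
  obtain C where C: "finite C" "W = span C" using fin_basis[OF fB sW(1)] sW(4) V_def by blast
  have top: "\<forall>H\<in>N. y0 \<in> H \<or> H \<inter> span B \<subseteq> span C"
  proof
    fix H assume H: "H \<in> N"
    show "y0 \<in> H \<or> H \<inter> span B \<subseteq> span C"
    proof (cases "y0 \<in> H")
      case False
      hence "H \<in> K" using H y0(1) K_def by blast
      hence "H \<inter> V \<subseteq> W0" unfolding W0_def U_def by blast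
      thus ?thesis using sW(3) C(2) V_def by blast
    qed simp
  qed
  have dec: "\<forall>v\<in>V. \<exists>w\<in>W. \<exists>a b. v = w + a *\<^sub>R y0 + b *\<^sub>R CJ y0"
  proof (rule ccontr)
    assume "\<not> ?thesis"
    then obtain v where v: "v \<in> V" "\<not> (\<exists>w\<in>W. \<exists>a b. v = w + a *\<^sub>R y0 + b *\<^sub>R CJ y0)" by blast
    define W2 where "W2 = {w + a *\<^sub>R v + b *\<^sub>R CJ v | w a b. w \<in> W}"
    have W2m: "\<exists>w a b. w \<in> W \<and> x = w + a *\<^sub>R v + b *\<^sub>R CJ v" if "x \<in> W2" for x
      using that unfolding W2_def by blast
    have W2i: "w + a *\<^sub>R v + b *\<^sub>R CJ v \<in> W2" if "w \<in> W" for w a b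
      using that unfolding W2_def by blast
    have sW2: "subspace W2"
      unfolding subspace_def
    proof (intro conjI ballI allI)
      show "0 \<in> W2" using W2i[of 0 0 0] sW(1) subspace_0 by force
    next
      fix x y assume "x \<in> W2" "y \<in> W2"
      then obtain w1 a1 b1 w2 a2 b2 where h: "w1 \<in> W" "w2 \<in> W" "x = w1 + a1 *\<^sub>R v + b1 *\<^sub>R CJ v"
        "y = w2 + a2 *\<^sub>R v + b2 *\<^sub>R CJ v" using W2m by metis
      have "x + y = (w1 + w2) + (a1 + a2) *\<^sub>R v + (b1 + b2) *\<^sub>R CJ v" using h by (simp add: algebra_simps)
      moreover have "w1 + w2 \<in> W" using h sW(1) subspace_add by blast
      ultimately show "x + y \<in> W2" using W2i by metis
    next
      fix c x assume "x \<in> W2"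
      then obtain w1 a1 b1 where h: "w1 \<in> W" "x = w1 + a1 *\<^sub>R v + b1 *\<^sub>R CJ v" using W2m by metis
      have "c *\<^sub>R x = (c *\<^sub>R w1) + (c * a1) *\<^sub>R v + (c * b1) *\<^sub>R CJ v" using h by (simp add: algebra_simps)
      moreover have "c *\<^sub>R w1 \<in> W" using h sW(1) subspace_scale by blast
      ultimately show "c *\<^sub>R x \<in> W2" using W2i by metis
    qed
    have iW2: "CJ ` W2 \<subseteq> W2"
    proof
      fix x assume "x \<in> CJ ` W2"
      then obtain w1 a1 b1 where h: "w1 \<in> W" "x = CJ (w1 + a1 *\<^sub>R v + b1 *\<^sub>R CJ v)" using W2m by blast
      have "x = CJ w1 + (- b1) *\<^sub>R v + a1 *\<^sub>R CJ v"
        using h(2) cs_sq[OF cs, of v] linear_add[OF lCJ] linear_scale[OF lCJ] by (simp add: algebra_simps)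
      moreover have "CJ w1 \<in> W" using h sW(2) by blast
      ultimately show "x \<in> W2" using W2i by metis
    qed
    have WW2: "W \<subseteq> W2" using W2i[of _ 0 0] by auto
    have W2V: "W2 \<subseteq> V"
    proof
      fix x assume "x \<in> W2"
      then obtain w1 a1 b1 where h: "w1 \<in> W" "x = w1 + a1 *\<^sub>R v + b1 *\<^sub>R CJ v" using W2m by metis
      have "w1 \<in> V" "CJ v \<in> V" using h sW(4) v(1) iB V_def by blast+
      thus "x \<in> V" using h v(1) sV by (simp add: subspace_add subspace_scale)
    qed
    have y0W2: "y0 \<notin> W2"
    proof
      assume "y0 \<in> W2"
      then obtain w1 a b where h: "w1 \<in> W" "y0 = w1 + a *\<^sub>R v + b *\<^sub>R CJ v" using W2m by metis
      show False
      proof (cases "a = 0 \<and> b = 0")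
        case True thus False using h sW(5) by simp
      next
        case False
        define r where "r = y0 - w1"
        have r: "r = a *\<^sub>R v + b *\<^sub>R CJ v" using h r_def by simp
        have cr: "CJ r = a *\<^sub>R CJ v - b *\<^sub>R v"
          using r cs_sq[OF cs, of v] linear_add[OF lCJ] linear_scale[OF lCJ] by (simp add: algebra_simps)
        have e1: "a *\<^sub>R r - b *\<^sub>R CJ r = (a*a + b*b) *\<^sub>R v" by (simp only: cr) (simp add: r algebra_simps)
        have n: "a*a + b*b \<noteq> 0" using False by (simp add: sum_squares_eq_zero_iff)
        have "(1/(a*a+b*b)) *\<^sub>R (a *\<^sub>R r - b *\<^sub>R CJ r) = v" unfolding e1 using n by auto
        hence "v = (1/(a*a+b*b)) *\<^sub>R (a *\<^sub>R r - b *\<^sub>R CJ r)" by simp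
        also have "\<dots> = (- ((a/(a*a+b*b)) *\<^sub>R w1 - (b/(a*a+b*b)) *\<^sub>R CJ w1)) + (a/(a*a+b*b)) *\<^sub>R y0 + (-(b/(a*a+b*b))) *\<^sub>R CJ y0"
        proof -
          have cd: "CJ (y0 - w1) = CJ y0 - CJ w1" by (rule linear_diff[OF lCJ])
          show ?thesis unfolding r_def cd by (simp add: algebra_simps divide_inverse)
        qed
        finally have ve: "v = (- ((a/(a*a+b*b)) *\<^sub>R w1 - (b/(a*a+b*b)) *\<^sub>R CJ w1)) + (a/(a*a+b*b)) *\<^sub>R y0 + (-(b/(a*a+b*b))) *\<^sub>R CJ y0" .
        have "CJ w1 \<in> W" using h sW(2) by blast
        hence "- ((a/(a*a+b*b)) *\<^sub>R w1 - (b/(a*a+b*b)) *\<^sub>R CJ w1) \<in> W"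
          using h(1) sW(1) by (simp add: subspace_neg subspace_diff subspace_scale)
        thus False using v(2) ve by blast
      qed
    qed
    have "W2 \<in> Wset" unfolding Wset_def using sW2 iW2 WW2 sW(3) W2V y0W2 by blast
    moreover have "v \<in> W2" using W2i[of 0 1 0] sW(1) subspace_0 by force
    moreover have "v \<notin> W" using v(2) by (metis add.right_neutral scale_zero_left)
    ultimately have "dim W < dim W2" using dim_strict[OF fB sW(1) sW2 WW2] W2V V_def by blast
    moreover have "dim W2 \<le> k" using k(2) \<open>W2 \<in> Wset\<close> by blast
    ultimately show False using W(2) by simp
  qed
  show ?thesis
    apply (rule exI[of _ y0], rule exI[of _ C])
    using y0(1) y00 C sW(2) sW(4) sW(5) top dec V_def by blast
qed




lemma approx_main:
  assumes cs: "complex_structure CJ" and nN: "nest CJ N"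
  shows "\<forall>B F \<delta>. finite B \<and> CJ ` span B \<subseteq> span B \<and> dim (span B) = n \<and> finite F \<and> F \<subseteq> span B \<and> \<delta> > 0
     \<longrightarrow> (\<exists>A\<in>FR CJ N. \<forall>x\<in>F. norm (A x - x) < \<delta>)"
proof (induction n rule: less_induct)
  case (less n)
  show ?case
  proof (intro allI impI, elim conjE)
    fix B F and \<delta> :: real
    assume fB: "finite B" and iB: "CJ ` span B \<subseteq> span B" and dB: "dim (span B) = n"
      and fF: "finite F" and FB: "F \<subseteq> span B" and d0: "\<delta> > 0"
    show "\<exists>A\<in>FR CJ N. \<forall>x\<in>F. norm (A x - x) < \<delta>"
    proof (cases "\<exists>v0\<in>span B. v0 \<noteq> 0")
      case False
      hence "\<forall>x\<in>F. x = 0" using FB by blast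
      thus ?thesis using FR_zero[OF nN cs] d0 by force
    next
      case True
      then obtain v0 where v0: "v0 \<in> span B" "v0 \<noteq> 0" by blast
      obtain y0 C where yC: "y0 \<in> span B" "y0 \<noteq> 0" "finite C" "CJ ` span C \<subseteq> span C" "span C \<subseteq> span B"
        "y0 \<notin> span C" "\<forall>H\<in>N. y0 \<in> H \<or> H \<inter> span B \<subseteq> span C"
        "\<forall>v\<in>span B. \<exists>w\<in>span C. \<exists>a b. v = w + a *\<^sub>R y0 + b *\<^sub>R CJ y0"
        using top_decomp[OF cs nN fB iB v0] by blast
      have dC: "dim (span C) < n"
        using dim_strict[OF fB subspace_span subspace_span yC(5) order_refl yC(1) yC(6)] dB by simp
      have IHC: "\<exists>A\<in>FR CJ N. \<forall>x\<in>F'. norm (A x - x) < \<delta>'"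
        if "finite F'" "F' \<subseteq> span C" "\<delta>' > 0" for F' and \<delta>' :: real
        using less.IH[OF dC] yC(3,4) that by blast
      have "\<forall>x\<in>F. \<exists>p. fst p \<in> span C \<and> x = fst p + fst (snd p) *\<^sub>R y0 + snd (snd p) *\<^sub>R CJ y0"
      proof
        fix x assume "x \<in> F"
        then obtain w a b where "w \<in> span C" "x = w + a *\<^sub>R y0 + b *\<^sub>R CJ y0" using yC(8) FB by blast
        thus "\<exists>p. fst p \<in> span C \<and> x = fst p + fst (snd p) *\<^sub>R y0 + snd (snd p) *\<^sub>R CJ y0"
          by (intro exI[of _ "(w,a,b)"]) simp
      qed
      then obtain p where p: "\<And>x. x \<in> F \<Longrightarrow> fst (p x) \<in> span C \<and> x = fst (p x) + fst (snd (p x)) *\<^sub>R y0 + snd (snd (p x)) *\<^sub>R CJ y0"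
        by metis
      define K where "K = (\<Sum>x\<in>F. \<bar>fst (snd (p x))\<bar> + \<bar>snd (snd (p x))\<bar>)"
      have K0: "K \<ge> 0" unfolding K_def by (intro sum_nonneg) simp
      have Kx: "\<bar>fst (snd (p x))\<bar> + \<bar>snd (snd (p x))\<bar> \<le> K" if "x \<in> F" for x
        unfolding K_def using fF that by (intro member_le_sum) auto
      define \<delta>' where "\<delta>' = \<delta> / (1 + 2 * K)"
      have d'0: "\<delta>' > 0" unfolding \<delta>'_def using d0 K0 by simp
      define F' where "F' = (\<lambda>x. fst (p x)) ` F"
      have fF': "finite F'" unfolding F'_def using fF by simp
      have F'C: "F' \<subseteq> span C" unfolding F'_def using p by blast
      obtain A where A: "A \<in> FR CJ N" "\<forall>x\<in>F'. norm (A x - x) < \<delta>'" "norm (A y0 - y0) \<le> 2 * \<delta>'"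
        using approx_y[OF cs nN yC(3) yC(4) yC(5) yC(6) yC(1) yC(2) yC(7) IHC fF' F'C d'0] by blast
      have lA: "linear A" using bops_lin[OF FR_bops[OF A(1)]] .
      have cA: "A (CJ y0) = CJ (A y0)" using bops_CJ[OF FR_bops[OF A(1)]] .
      have lCJ: "linear CJ" by (rule cs_linear[OF cs])
      have "\<forall>x\<in>F. norm (A x - x) < \<delta>"
      proof
        fix x assume xF: "x \<in> F"
        define w where "w = fst (p x)"
        define a where "a = fst (snd (p x))"
        define b where "b = snd (snd (p x))"
        have xe: "x = w + a *\<^sub>R y0 + b *\<^sub>R CJ y0" using p[OF xF] w_def a_def b_def by simp
        have wF: "w \<in> F'" unfolding F'_def w_def using xF by blast
        have cd: "CJ (A y0 - y0) = CJ (A y0) - CJ y0" by (rule linear_diff[OF lCJ])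
        have "A x - x = (A w - w) + a *\<^sub>R (A y0 - y0) + b *\<^sub>R CJ (A y0 - y0)"
          unfolding xe cd using linear_add[OF lA] linear_scale[OF lA] cA
          by (simp add: algebra_simps)
        hence "norm (A x - x) \<le> norm (A w - w) + norm (a *\<^sub>R (A y0 - y0)) + norm (b *\<^sub>R CJ (A y0 - y0))"
          by (metis norm_triangle_ineq order_trans add_right_mono)
        also have "\<dots> = norm (A w - w) + \<bar>a\<bar> * norm (A y0 - y0) + \<bar>b\<bar> * norm (A y0 - y0)"
          using cs_norm[OF cs] by simp
        also have "\<dots> \<le> norm (A w - w) + \<bar>a\<bar> * (2 * \<delta>') + \<bar>b\<bar> * (2 * \<delta>')"
          using A(3) by (intro add_mono mult_left_mono) auto
        also have "\<dots> < \<delta>' + (\<bar>a\<bar> + \<bar>b\<bar>) * (2 * \<delta>')"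
          using A(2) wF by (simp add: algebra_simps)
        also have "\<dots> \<le> \<delta>' + K * (2 * \<delta>')"
          using Kx[OF xF] d'0 a_def b_def by (intro add_left_mono mult_right_mono) auto
        also have "\<dots> = \<delta>' * (1 + 2 * K)" by (simp add: algebra_simps)
        also have "\<dots> = \<delta>" unfolding \<delta>'_def using K0 by simp
        finally show "norm (A x - x) < \<delta>" .
      qed
      thus ?thesis using A(1) by blast
    qed
  qed
qed




lemma approx_id:
  assumes cs: "complex_structure CJ" and nN: "nest CJ N" and fF: "finite F" and d0: "\<delta> > 0"
  shows "\<exists>A\<in>FR CJ N. \<forall>x\<in>F. norm (A x - x) < \<delta>"
proof -
  define B where "B = F \<union> CJ ` F"
  have fB: "finite B" unfolding B_def using fF by simp
  have lCJ: "linear CJ" by (rule cs_linear[OF cs])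
  have "CJ ` B \<subseteq> span B"
  proof
    fix z assume "z \<in> CJ ` B"
    then obtain x where x: "x \<in> B" "z = CJ x" by blast
    show "z \<in> span B"
    proof (cases "x \<in> F")
      case True thus ?thesis using x B_def by (simp add: span_base)
    next
      case False
      then obtain x' where "x' \<in> F" "x = CJ x'" using x B_def by blast
      hence "z = - x'" using x cs_sq[OF cs] by simp
      moreover have "x' \<in> span B" using \<open>x' \<in> F\<close> B_def by (simp add: span_base)
      ultimately show ?thesis by (simp add: span_neg)
    qed
  qed
  hence "span (CJ ` B) \<subseteq> span B" by (simp add: span_minimal subspace_span)
  hence iB: "CJ ` span B \<subseteq> span B" using linear_span_image[OF lCJ, of B] by simp
  have FB: "F \<subseteq> span B" unfolding B_def using span_superset by blast
  show ?thesis using approx_main[OF cs nN, of "dim (span B)"] fB iB fF FB d0 by blast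
qed

lemma bimod_D:
  assumes "bimodule CJ N M"
  shows "M \<subseteq> bops CJ" "\<And>A T. A \<in> nest_alg CJ N \<Longrightarrow> T \<in> M \<Longrightarrow> T \<circ> A \<in> M"
proof -
  have "op_csubspace CJ M" using assms unfolding bimodule_def by simp
  thus "M \<subseteq> bops CJ" unfolding op_csubspace_def by simp
  show "\<And>A T. A \<in> nest_alg CJ N \<Longrightarrow> T \<in> M \<Longrightarrow> T \<circ> A \<in> M"
    using assms unfolding bimodule_def by simp
qed

lemma part1:
  assumes cs: "complex_structure CJ" and nN: "nest CJ N" and bm: "bimodule CJ N M"
  shows "M \<subseteq> sot_closure CJ {T \<in> M. finite_rank T}"
proof
  fix T assume TM: "T \<in> M"
  have Tb: "T \<in> bops CJ" using bimod_D(1)[OF bm] TM by blast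
  hence blT: "bounded_linear T" unfolding bops_def by simp
  obtain K where K: "K > 0" "\<forall>x. norm (T x) \<le> norm x * K" using bounded_linear.pos_bounded[OF blT] by blast
  have lT: "linear T" using blT bounded_linear.linear by blast
  have "\<exists>S\<in>{T \<in> M. finite_rank T}. \<forall>x\<in>F. norm (S x - T x) < e" if fF: "finite F" and e0: "e > 0" for F and e :: real
  proof -
    obtain A where A: "A \<in> FR CJ N" "\<forall>x\<in>F. norm (A x - x) < e / K"
      using approx_id[OF cs nN fF] e0 K(1) by (meson divide_pos_pos)
    have An: "A \<in> nest_alg CJ N" and Af: "finite_rank A" using A(1) unfolding FR_def by simp_all
    have SM: "T \<circ> A \<in> M" by (rule bimod_D(2)[OF bm An TM])
    obtain F0 where F0: "finite F0" "range A \<subseteq> span F0" using Af unfolding finite_rank_def by blast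
    have "range (T \<circ> A) \<subseteq> T ` span F0" using F0(2) by auto
    also have "\<dots> = span (T ` F0)" using linear_span_image[OF lT, of F0] by simp
    finally have "finite_rank (T \<circ> A)" unfolding finite_rank_def using F0(1) by blast
    moreover have "norm ((T \<circ> A) x - T x) < e" if "x \<in> F" for x
    proof -
      have "(T \<circ> A) x - T x = T (A x - x)" using linear_diff[OF lT] by simp
      hence "norm ((T \<circ> A) x - T x) \<le> norm (A x - x) * K" using K(2) by simp
      also have "\<dots> < (e / K) * K" using A(2) that K(1) by (intro mult_strict_right_mono) auto
      also have "\<dots> = e" using K(1) by simp
      finally show ?thesis .
    qed
    ultimately show ?thesis using SM by blast
  qed
  thus "T \<in> sot_closure CJ {T \<in> M. finite_rank T}" unfolding sot_closure_def using Tb by blast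
qed

lemma part2: "sot_closure CJ X \<subseteq> wot_closure CJ X"
proof
  fix T assume T: "T \<in> sot_closure CJ X"
  have Tb: "T \<in> bops CJ" using T unfolding sot_closure_def by blast
  have sot: "\<And>F e. finite F \<Longrightarrow> e > 0 \<Longrightarrow> \<exists>S\<in>X. \<forall>x\<in>F. norm (S x - T x) < e"
    using T unfolding sot_closure_def by blast
  have "\<exists>S\<in>X. \<forall>(x,f)\<in>F. cmod (f (S x - T x)) < e"
    if fF: "finite F" and FU: "F \<subseteq> UNIV \<times> cdual CJ" and e0: "e > 0" for F and e :: real
  proof -
    define kf where "kf f = (SOME K. K > 0 \<and> (\<forall>v. norm (f v) \<le> norm v * K))" for f :: "'a \<Rightarrow> complex"
    have kf: "kf f > 0 \<and> (\<forall>v. norm (f v) \<le> norm v * kf f)" if "f \<in> cdual CJ" for f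
    proof -
      have "bounded_linear f" using that unfolding cdual_def by simp
      from bounded_linear.pos_bounded[OF this] show ?thesis unfolding kf_def by (rule someI_ex)
    qed
    define Kt where "Kt = 1 + (\<Sum>q\<in>F. kf (snd q))"
    have kfpos: "\<And>q. q \<in> F \<Longrightarrow> kf (snd q) > 0" using kf FU by force
    have Kt0: "Kt > 0" unfolding Kt_def using kfpos by (smt (verit) sum_nonneg)
    have kle: "kf (snd q) \<le> Kt" if "q \<in> F" for q
    proof -
      have "kf (snd q) \<le> (\<Sum>q\<in>F. kf (snd q))"
        using fF that kfpos by (intro member_le_sum) (auto intro: less_imp_le)
      thus ?thesis unfolding Kt_def by simp
    qed
    obtain S where S: "S \<in> X" "\<forall>x\<in>fst ` F. norm (S x - T x) < e / Kt"
      using sot[of "fst ` F" "e / Kt"] fF e0 Kt0 by auto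
    have "\<forall>(x,f)\<in>F. cmod (f (S x - T x)) < e"
    proof (intro ballI, clarify)
      fix x f assume q: "(x,f) \<in> F"
      have fc: "f \<in> cdual CJ" using q FU by blast
      have "cmod (f (S x - T x)) \<le> norm (S x - T x) * kf f" using kf[OF fc] by simp
      also have "\<dots> < (e / Kt) * kf f"
        using S(2) q kf[OF fc] by (intro mult_strict_right_mono) force+
      also have "\<dots> \<le> (e / Kt) * Kt"
        using kle[OF q] e0 Kt0 by (intro mult_left_mono) simp_all
      also have "\<dots> = e" using Kt0 by simp
      finally show "cmod (f (S x - T x)) < e" .
    qed
    thus ?thesis using S(1) by blast
  qed
  thus "T \<in> wot_closure CJ X" unfolding wot_closure_def using Tb by blast
qed



theorem mainTheorem9:
  fixes CJ :: "'a::banach \<Rightarrow> 'a" and N :: "'a set set" and M :: "('a \<Rightarrow> 'a) set"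
  assumes "complex_structure CJ"
    and "nest CJ N"
    and "bimodule CJ N M"
  shows "M \<subseteq> sot_closure CJ {T \<in> M. finite_rank T} \<and>
         sot_closure CJ {T \<in> M. finite_rank T} \<subseteq> wot_closure CJ {T \<in> M. finite_rank T}"
  using part1[OF assms] part2 by blast

end
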